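(* Let $k\le n$ be positive integers and $A\in\mathbb{C}^{n\times n}$ with eigenvalues ordered so that $|\lambda_1(A)|\ge\cdots\ge|\lambda_n(A)|$. Then $$\left|\prod_{i=1}^k\lambda_i(A)\right|\le\left(\frac nk\right)^{k/2}\min\left\{\max_{|\alpha|=k}\prod_{i\in\alpha}\|\mathrm{col}_i(A)\|_2,\ \max_{|\alpha|=k}\prod_{i\in\alpha}\|\mathrm{row}_i(A)\|_2\right\},$$ where the maxima are over subsets $\alpha\subseteq\{1,\ldots,n\}$ with $|\alpha|=k$.
   Context: $\mathrm{col}_i(A)$ is the $i$th column and $\mathrm{row}_i(A)$ the (transposed) $i$th row of $A$; $\|\cdot\|_2$ is the Euclidean norm. *)

theory Defs
  imports "Jordan_Normal_Form.Char_Poly"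
begin

definition vec_norm2 :: "complex vec \<Rightarrow> real" where
  "vec_norm2 v = sqrt (\<Sum>j<dim_vec v. (cmod (v $ j))\<^sup>2)"

text \<open>es is the list of all eigenvalues of A, repeated according to algebraic
  multiplicity, i.e. the roots of the characteristic polynomial.\<close>
definition is_eigenvalue_list :: "complex mat \<Rightarrow> complex list \<Rightarrow> bool" where
  "is_eigenvalue_list A es \<longleftrightarrow>
     length es = dim_row A \<and> char_poly A = (\<Prod>e\<leftarrow>es. [:- e, 1:])"

end

theory Submission imports Defs "Jordan_Normal_Form.Schur_Decomposition" "HOL-Analysis.Convex"
begin

definition cadjw :: "complex mat \<Rightarrow> (nat \<Rightarrow> complex) \<Rightarrow> complex mat" where
  "cadjw M u = mat (dim_col M) (dim_row M) (\<lambda>(i,j). cnj (M $$ (j,i)) * u j)"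

definition rowsel :: "complex mat \<Rightarrow> nat \<Rightarrow> (nat \<Rightarrow> nat) \<Rightarrow> complex mat" where
  "rowsel Y k f = mat k k (\<lambda>(i,j). Y $$ (f i, j))"

definition Fset :: "nat \<Rightarrow> nat \<Rightarrow> (nat \<Rightarrow> nat) set" where
  "Fset k n = {f. (\<forall>i\<in>{0..<k}. f i \<in> {0..<n}) \<and> (\<forall>i. i \<notin> {0..<k} \<longrightarrow> f i = i)}"

lemma finite_Fset: "finite (Fset k n)"
  unfolding Fset_def by (rule finite_bounded_functions, auto)

lemma rowsel_carrier[simp]: "rowsel Y k f \<in> carrier_mat k k"
  unfolding rowsel_def by auto

lemma rowsel_dims[simp]: "dim_row (rowsel Y k f) = k" "dim_col (rowsel Y k f) = k"
  unfolding rowsel_def by auto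

lemma CB1:
  assumes X: "X \<in> carrier_mat k n" and Y: "Y \<in> carrier_mat n k"
  shows "det (X * Y) = (\<Sum>f\<in>Fset k n. (\<Prod>i\<in>{0..<k}. X $$ (i, f i)) * det (rowsel Y k f))"
proof -
  have "det (X * Y) = (\<Sum>f\<in>Fset k n. det (mat\<^sub>r k k (\<lambda> i. X $$ (i, f i) \<cdot>\<^sub>v row Y (f i))))"
    unfolding mat_mul_finsum_alt[OF X Y] Fset_def
    by (rule det_linear_rows_sum, insert X Y, auto)
  also have "\<dots> = (\<Sum>f\<in>Fset k n. (\<Prod>i\<in>{0..<k}. X $$ (i, f i)) * det (rowsel Y k f))"
  proof (rule sum.cong[OF refl])
    fix f assume f: "f \<in> Fset k n"
    have "det (mat\<^sub>r k k (\<lambda> i. X $$ (i, f i) \<cdot>\<^sub>v row Y (f i))) =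
      prod (\<lambda>i. X $$ (i, f i)) {0..<k} * det (mat\<^sub>r k k (\<lambda> i. row Y (f i)))"
      by (rule det_rows_mul, insert Y, auto)
    also have "mat\<^sub>r k k (\<lambda> i. row Y (f i)) = rowsel Y k f"
      by (rule eq_matI, insert f Y, auto simp: rowsel_def Fset_def)
    finally show "det (mat\<^sub>r k k (\<lambda> i. X $$ (i, f i) \<cdot>\<^sub>v row Y (f i))) =
      (\<Prod>i\<in>{0..<k}. X $$ (i, f i)) * det (rowsel Y k f)" .
  qed
  finally show ?thesis .
qed

lemma rowsel_perm:
  assumes p: "p permutes {0..<k}"
  shows "det (rowsel Y k (f \<circ> p)) = signof p * det (rowsel Y k f)"
proof -
  have "rowsel Y k (f \<circ> p) = mat k k (\<lambda> (i,j). rowsel Y k f $$ (p i, j))"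
    by (rule eq_matI, insert p, auto simp: rowsel_def permutes_in_image)
  thus ?thesis using det_permute_rows[OF rowsel_carrier p] by simp
qed

lemma rowsel_noninj:
  assumes "\<not> inj_on f {0..<k}"
  shows "det (rowsel Y k f) = 0"
proof -
  from assms obtain i j where ij: "f i = f j" "i \<noteq> j" "i < k" "j < k"
    unfolding inj_on_def by auto
  show ?thesis
    by (rule det_identical_rows[OF rowsel_carrier ij(2-4)], insert ij, auto simp: rowsel_def)
qed

lemma Fset_comp: "f \<in> Fset k n \<Longrightarrow> p permutes {0..<k} \<Longrightarrow> f \<circ> p \<in> Fset k n"
  unfolding Fset_def by (auto simp: permutes_in_image permutes_not_in)

lemma CB2:
  assumes Y: "Y \<in> carrier_mat n k"
  shows "of_nat (fact k) * det (cadjw Y u * Y) =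
    (\<Sum>f\<in>Fset k n. (\<Prod>i\<in>{0..<k}. u (f i)) * (cnj (det (rowsel Y k f)) * det (rowsel Y k f)))"
proof -
  let ?P = "{p. p permutes {0..<k}}"
  let ?F = "Fset k n"
  define a where "a = (\<lambda>f. (\<Prod>i\<in>{0..<k}. cnj (Y $$ (f i, i)) * u (f i)) * det (rowsel Y k f))"
  have cY: "cadjw Y u \<in> carrier_mat k n" using Y unfolding cadjw_def by auto
  have S: "det (cadjw Y u * Y) = sum a ?F"
    unfolding CB1[OF cY Y] a_def
    by (rule sum.cong[OF refl], rule arg_cong2[where f="(*)"], rule prod.cong, insert Y,
        auto simp: cadjw_def Fset_def)
  have S2: "det (cadjw Y u * Y) = sum (\<lambda>f. a (f \<circ> p)) ?F" if p: "p permutes {0..<k}" for p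
  proof -
    have "sum (\<lambda>f. a (f \<circ> p)) ?F = sum a ?F"
      by (rule sum.reindex_bij_witness[where i="\<lambda>f. f \<circ> Hilbert_Choice.inv p" and j="\<lambda>f. f \<circ> p"],
        auto simp: Fset_comp[OF _ p] Fset_comp[OF _ permutes_inv[OF p]] comp_assoc
          permutes_inv_o[OF p])
    thus ?thesis using S by simp
  qed
  have "of_nat (fact k) * det (cadjw Y u * Y) = (\<Sum>p\<in>?P. det (cadjw Y u * Y))"
    by (simp add: card_permutations)
  also have "\<dots> = (\<Sum>p\<in>?P. \<Sum>f\<in>?F. a (f \<circ> p))"
    by (rule sum.cong[OF refl], rule S2, auto)
  also have "\<dots> = (\<Sum>f\<in>?F. \<Sum>p\<in>?P. a (f \<circ> p))" by (rule sum.swap)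
  also have "\<dots> = (\<Sum>f\<in>?F. (\<Prod>i\<in>{0..<k}. u (f i)) * (cnj (det (rowsel Y k f)) * det (rowsel Y k f)))"
  proof (rule sum.cong[OF refl])
    fix f assume f: "f \<in> ?F"
    have "(\<Sum>p\<in>?P. a (f \<circ> p)) = (\<Sum>p\<in>?P. ((\<Prod>i\<in>{0..<k}. u (f i)) * det (rowsel Y k f)) *
         (signof p * (\<Prod>i\<in>{0..<k}. cnj (Y $$ (f (p i), i)))))"
    proof (rule sum.cong[OF refl])
      fix p assume "p \<in> ?P"
      hence p: "p permutes {0..<k}" by auto
      have u: "(\<Prod>i\<in>{0..<k}. u (f (p i))) = (\<Prod>i\<in>{0..<k}. u (f i))"
        using prod.permute[OF p, of "\<lambda>i. u (f i)"] by (simp add: o_def)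
      show "a (f \<circ> p) = ((\<Prod>i\<in>{0..<k}. u (f i)) * det (rowsel Y k f)) *
         (signof p * (\<Prod>i\<in>{0..<k}. cnj (Y $$ (f (p i), i))))"
        unfolding a_def rowsel_perm[OF p] prod.distrib using u by (simp add: ac_simps)
    qed
    also have "\<dots> = ((\<Prod>i\<in>{0..<k}. u (f i)) * det (rowsel Y k f)) *
         (\<Sum>p\<in>?P. signof p * (\<Prod>i\<in>{0..<k}. cnj (Y $$ (f (p i), i))))"
      by (simp add: sum_distrib_left)
    also have "(\<Sum>p\<in>?P. signof p * (\<Prod>i\<in>{0..<k}. cnj (Y $$ (f (p i), i)))) = cnj (det (rowsel Y k f))"
    proof -
      have "det (rowsel Y k f) = (\<Sum>p\<in>?P. signof p * (\<Prod>i = 0 ..< k. rowsel Y k f $$ (p i, i)))"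
        using mat_det_left_def[OF rowsel_carrier] by simp
      also have "\<dots> = (\<Sum>p\<in>?P. signof p * (\<Prod>i = 0 ..< k. Y $$ (f (p i), i)))"
        by (rule sum.cong[OF refl], rule arg_cong2[where f="(*)"], rule refl, rule prod.cong, 
           auto simp: rowsel_def permutes_in_image)
      finally show ?thesis by (simp add: cnj_sum cnj_prod)
    qed
    finally show "(\<Sum>p\<in>?P. a (f \<circ> p)) = (\<Prod>i\<in>{0..<k}. u (f i)) * (cnj (det (rowsel Y k f)) * det (rowsel Y k f))"
      by (unfold comp_def, simp add: ac_simps)
  qed
  finally show ?thesis .
qed

definition Sr :: "complex mat \<Rightarrow> nat \<Rightarrow> nat \<Rightarrow> (nat \<Rightarrow> real) \<Rightarrow> real" where
  "Sr Y n k ur = (\<Sum>f\<in>Fset k n. (\<Prod>i\<in>{0..<k}. ur (f i)) * (cmod (det (rowsel Y k f)))\<^sup>2)"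

lemma cnj_mult_self: "cnj z * z = complex_of_real ((cmod z)^2)"
  using complex_norm_square[of z] by (simp add: mult.commute del: of_real_power)

lemma CB3:
  assumes Y: "Y \<in> carrier_mat n k"
  shows "det (cadjw Y (\<lambda>j. complex_of_real (ur j)) * Y) = complex_of_real (Sr Y n k ur / fact k)"
proof -
  have "of_nat (fact k) * det (cadjw Y (\<lambda>j. complex_of_real (ur j)) * Y) = complex_of_real (Sr Y n k ur)"
    unfolding CB2[OF Y] cnj_mult_self Sr_def of_real_sum of_real_mult of_real_prod by simp
  hence "det (cadjw Y (\<lambda>j. complex_of_real (ur j)) * Y) = complex_of_real (Sr Y n k ur) / of_nat (fact k)"
    by (simp add: field_simps)
  thus ?thesis by simp
qed

lemma Sr_nonneg: "(\<And>j. ur j \<ge> 0) \<Longrightarrow> Sr Y n k ur \<ge> 0"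
  unfolding Sr_def by (intro sum_nonneg mult_nonneg_nonneg prod_nonneg, auto)

lemma QF:
  assumes M: "M \<in> carrier_mat n k" and v: "v \<in> carrier_vec k"
  shows "(\<Sum>i<k. cnj (v $ i) * ((cadjw M w * M) *\<^sub>v v) $ i) = 
     (\<Sum>j<n. w j * (cnj ((M *\<^sub>v v) $ j) * (M *\<^sub>v v) $ j))"
proof -
  have "(\<Sum>i<k. cnj (v $ i) * ((cadjw M w * M) *\<^sub>v v) $ i) = 
    (\<Sum>i<k. cnj (v $ i) * (\<Sum>l<k. (\<Sum>j<n. cnj (M $$ (j,i)) * w j * M $$ (j,l)) * v $ l))"
    using M v by (auto simp: cadjw_def scalar_prod_def atLeast0LessThan intro!: sum.cong)
  also have "\<dots> = (\<Sum>j<n. w j * (\<Sum>i<k. cnj (M $$ (j,i)) * cnj (v $ i)) * (\<Sum>l<k. M $$ (j,l) * v $ l))"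
    by (simp add: sum_distrib_left sum_distrib_right ac_simps, subst sum.swap, 
        rule sum.cong[OF refl], subst sum.swap, simp)
  also have "\<dots> = (\<Sum>j<n. w j * (cnj ((M *\<^sub>v v) $ j) * (M *\<^sub>v v) $ j))"
    using M v by (auto simp: scalar_prod_def atLeast0LessThan cnj_sum intro!: sum.cong)
  finally show ?thesis .
qed

definition trc :: "complex mat \<Rightarrow> complex" where
  "trc M = (\<Sum>i<dim_row M. M $$ (i,i))"

lemma trc_comm:
  assumes M: "M \<in> carrier_mat a b" and N: "N \<in> carrier_mat b a"
  shows "trc (M * N) = trc (N * M)"
proof -
  have "trc (M * N) = (\<Sum>i<a. \<Sum>j<b. M $$ (i,j) * N $$ (j,i))"
    using M N by (auto simp: trc_def scalar_prod_def atLeast0LessThan intro!: sum.cong)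
  also have "\<dots> = (\<Sum>j<b. \<Sum>i<a. N $$ (j,i) * M $$ (i,j))"
    by (subst sum.swap, simp add: mult.commute)
  also have "\<dots> = trc (N * M)"
    using M N by (auto simp: trc_def scalar_prod_def atLeast0LessThan intro!: sum.cong)
  finally show ?thesis .
qed

lemma trc_similar:
  assumes "similar_mat_wit K B P Q" and K: "K \<in> carrier_mat k k"
  shows "trc K = trc B"
proof -
  from assms have B: "B \<in> carrier_mat k k" and P: "P \<in> carrier_mat k k" and Q: "Q \<in> carrier_mat k k"
    and QP: "Q * P = 1\<^sub>m k" and KB: "K = P * B * Q"
    unfolding similar_mat_wit_def Let_def by auto
  have "trc K = trc (P * (B * Q))" using KB P B Q by simp
  also have "\<dots> = trc ((B * Q) * P)" by (rule trc_comm, insert P B Q, auto)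
  also have "\<dots> = trc B" using B Q P QP by simp
  finally show ?thesis .
qed

lemma EIG:
  assumes K: "K \<in> carrier_mat k k" and k: "0 < k"
    and ev: "\<And>e. eigenvalue K e \<Longrightarrow> Im e = 0 \<and> Re e \<ge> 0"
    and tr: "Re (trc K) \<le> c"
  shows "Im (det K) = 0 \<and> Re (det K) \<le> (c / k) ^ k"
proof -
  obtain es where cp: "char_poly K = (\<Prod> a \<leftarrow> es. [:- a, 1:])" and len: "length es = k"
    using char_poly_factorized[OF K] by blast
  obtain B P Q where sd: "schur_decomposition K es = (B,P,Q)" by (cases "schur_decomposition K es", auto)
  from schur_decomposition[OF K cp sd] have sim: "similar_mat_wit K B P Q" and ut: "upper_triangular B"
    and dg: "diag_mat B = es" by auto
  have B: "B \<in> carrier_mat k k" using sim K unfolding similar_mat_wit_def Let_def by auto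
  have esi: "Im (es ! i) = 0 \<and> Re (es ! i) \<ge> 0" if i: "i < k" for i
  proof -
    have "poly (char_poly K) (es ! i) = 0" unfolding cp poly_prod_list
      using i len by (auto simp: prod_list_zero_iff)
    hence "eigenvalue K (es ! i)" using eigenvalue_root_char_poly[OF K] by auto
    thus ?thesis using ev by auto
  qed
  have dprod: "det K = (\<Prod>i<k. es ! i)"
  proof -
    have "det K = det B" by (rule det_similar, insert sim, auto simp: similar_mat_def)
    also have "\<dots> = (\<Prod>i=0..<k. B $$ (i,i))" using det_upper_triangular[OF ut B] B
      by (simp add: prod_list_diag_prod)
    also have "\<dots> = (\<Prod>i<k. es ! i)" unfolding dg[symmetric] using B
      by (auto simp: diag_mat_def atLeast0LessThan intro!: prod.cong)
    finally show ?thesis .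
  qed
  have tsum: "trc K = (\<Sum>i<k. es ! i)"
  proof -
    have "trc K = trc B" by (rule trc_similar[OF sim K])
    also have "\<dots> = (\<Sum>i<k. es ! i)" using B dg len unfolding trc_def diag_mat_def
      by (auto intro!: sum.cong simp: nth_map_upt)
    finally show ?thesis .
  qed
  define x where "x i = Re (es ! i)" for i
  have esx: "es ! i = complex_of_real (x i)" if "i < k" for i
    using esi[OF that] unfolding x_def by (simp add: complex_eq_iff)
  have dK: "det K = complex_of_real (\<Prod>i<k. x i)" unfolding dprod using esx by simp
  have tK: "Re (trc K) = (\<Sum>i<k. x i)" unfolding tsum using esx by (simp add: x_def)
  have x0: "\<And>i. i \<in> {..<k} \<Longrightarrow> x i \<ge> 0" using esi x_def by auto
  have am: "(\<Sum>i\<in>{..<k}. x i / card {..<k}) \<ge> (\<Prod>i\<in>{..<k}. x i) powr (1 / card {..<k})"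
    by (rule arith_geom_mean, insert k x0, auto)
  have p0: "(\<Prod>i<k. x i) \<ge> 0" using x0 by (intro prod_nonneg, auto)
  have root: "p = (p powr (1 / k)) ^ k" if "p \<ge> 0" for p :: real
  proof (cases "p = 0")
    case True thus ?thesis using k by simp
  next
    case False
    hence pp: "p > 0" using that by simp
    have "(p powr (1 / k)) ^ k = (p powr (1 / k)) powr (real k)"
      by (rule powr_realpow[symmetric], insert pp, simp)
    also have "\<dots> = p" using k pp by (simp add: powr_powr)
    finally show ?thesis by simp
  qed
  have "(\<Prod>i<k. x i) = ((\<Prod>i<k. x i) powr (1 / k)) ^ k" by (rule root[OF p0])
  also have "\<dots> \<le> ((\<Sum>i<k. x i) / k) ^ k"
    by (rule power_mono, insert am, auto simp: sum_divide_distrib)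
  also have "\<dots> \<le> (c / k) ^ k"
    by (rule power_mono, insert tr tK x0 k, auto intro!: divide_right_mono divide_nonneg_nonneg sum_nonneg)
  finally show ?thesis using dK by (simp del: of_real_prod)
qed

lemma QF_real:
  assumes M: "M \<in> carrier_mat n k" and v: "v \<in> carrier_vec k"
  shows "(\<Sum>i<k. cnj (v $ i) * ((cadjw M (\<lambda>j. complex_of_real (wr j)) * M) *\<^sub>v v) $ i) = 
     complex_of_real (\<Sum>j<n. wr j * (cmod ((M *\<^sub>v v) $ j))\<^sup>2)"
  unfolding QF[OF M v] of_real_sum of_real_mult cnj_mult_self by simp

lemma vec_zero_if_normsq:
  assumes a: "a \<in> carrier_vec n" and s: "(\<Sum>j<n. (cmod (a $ j))\<^sup>2) = 0"
  shows "a = 0\<^sub>v n"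
proof -
  have "\<forall>j\<in>{..<n}. (cmod (a $ j))\<^sup>2 = 0" using s by (subst sum_nonneg_eq_0_iff[symmetric], auto)
  thus ?thesis using a by (intro eq_vecI, auto)
qed

lemma cadjw_mult:
  assumes M: "M \<in> carrier_mat a b" and N: "N \<in> carrier_mat b c"
  shows "cadjw (M * N) (\<lambda>j. complex_of_real 1) = cadjw N (\<lambda>j. complex_of_real 1) * cadjw M (\<lambda>j. complex_of_real 1)"
  by (rule eq_matI, insert M N, auto simp: cadjw_def scalar_prod_def cnj_sum mult.commute intro!: sum.cong)

lemma det_cadjw:
  assumes M: "M \<in> carrier_mat k k"
  shows "det (cadjw M (\<lambda>j. complex_of_real 1)) = cnj (det M)"
proof -
  have "cadjw M (\<lambda>j. complex_of_real 1) = transpose_mat (map_mat cnj M)"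
    by (rule eq_matI, insert M, auto simp: cadjw_def)
  hence "det (cadjw M (\<lambda>j. complex_of_real 1)) = det (map_mat cnj M)"
    using det_transpose[of "map_mat cnj M" k] M by simp
  also have "\<dots> = cnj (det M)"
    unfolding det_def'[OF M] using M
    by (subst det_def'[of _ k], auto simp: cnj_sum cnj_prod intro!: sum.cong prod.cong)
  finally show ?thesis .
qed

lemma det_zero_row:
  assumes M: "M \<in> carrier_mat k k" and i: "i < k" and z: "\<And>j. j < k \<Longrightarrow> M $$ (i,j) = 0"
  shows "det M = 0"
  unfolding det_def'[OF M]
proof (rule sum.neutral, intro ballI)
  fix p assume "p \<in> {p. p permutes {0..<k}}"
  hence "p i < k" using i by (auto simp: permutes_in_image)
  hence "(\<Prod>l = 0..<k. M $$ (l, p l)) = 0" using i z by (intro prod_zero bexI[of _ i], auto)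
  thus "signof p * (\<Prod>l = 0..<k. M $$ (l, p l)) = 0" by simp
qed

lemma vec_norm2_nonneg: "vec_norm2 v \<ge> 0"
  unfolding vec_norm2_def by (simp add: sum_nonneg)

lemma vec_norm2_zero:
  assumes "vec_norm2 v = 0" and "p < dim_vec v"
  shows "v $ p = 0"
proof -
  have "(\<Sum>j<dim_vec v. (cmod (v $ j))\<^sup>2) = 0" using assms(1) unfolding vec_norm2_def
    by (simp add: sum_nonneg)
  hence "\<forall>j\<in>{..<dim_vec v}. (cmod (v $ j))\<^sup>2 = 0" by (subst sum_nonneg_eq_0_iff[symmetric], auto)
  thus ?thesis using assms(2) by auto
qed

lemma proj_bound:
  assumes X: "X \<in> carrier_mat n k" and Gi: "Ginv \<in> carrier_mat k k"
    and GG: "(cadjw X (\<lambda>j. complex_of_real 1) * X) * Ginv = 1\<^sub>m k"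
  shows "\<exists>N. (\<Sum>i<k. (\<Sum>p<n. y p * X $$ (p,i)) * (\<Sum>l<k. Ginv $$ (i,l) * cnj (\<Sum>p<n. y p * X $$ (p,l))))
      = complex_of_real N \<and> N \<le> (\<Sum>p<n. (cmod (y p))\<^sup>2)"
proof -
  define G where "G = cadjw X (\<lambda>j. complex_of_real 1) * X"
  have G: "G \<in> carrier_mat k k" unfolding G_def using X by (auto simp: cadjw_def)
  define d where "d l = (\<Sum>p<n. y p * X $$ (p,l))" for l
  define cd where "cd = vec k (\<lambda>l. cnj (d l))"
  define z where "z = Ginv *\<^sub>v cd"
  have cd: "cd \<in> carrier_vec k" unfolding cd_def by auto
  have z: "z \<in> carrier_vec k" unfolding z_def using Gi cd by auto
  have zi: "z $ i = (\<Sum>l<k. Ginv $$ (i,l) * cnj (d l))" if "i < k" for i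
    unfolding z_def cd_def using that Gi by (auto simp: scalar_prod_def atLeast0LessThan intro!: sum.cong)
  define q where "q = (\<Sum>i<k. d i * z $ i)"
  have qeq: "(\<Sum>i<k. (\<Sum>p<n. y p * X $$ (p,i)) * (\<Sum>l<k. Ginv $$ (i,l) * cnj (\<Sum>p<n. y p * X $$ (p,l)))) = q"
    unfolding q_def d_def using zi unfolding d_def by (intro sum.cong, auto)
  have Gz: "G *\<^sub>v z = cd"
  proof -
    have "G *\<^sub>v z = (G * Ginv) *\<^sub>v cd" unfolding z_def by (rule assoc_mult_mat_vec[OF G Gi cd, symmetric])
    also have "\<dots> = cd" unfolding G_def GG using cd by simp
    finally show ?thesis .
  qed
  define a where "a = X *\<^sub>v z"
  define N where "N = (\<Sum>j<n. (cmod (a $ j))\<^sup>2)"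
  have "cnj q = (\<Sum>i<k. cnj (z $ i) * (G *\<^sub>v z) $ i)"
    unfolding Gz q_def cd_def cnj_sum by (intro sum.cong, auto simp: mult.commute)
  also have "\<dots> = complex_of_real N" unfolding G_def N_def a_def using QF_real[OF X z, of "\<lambda>j. 1"] by simp
  finally have qN: "q = complex_of_real N" by (metis complex_cnj_cnj complex_cnj_complex_of_real)
  have aj: "a $ p = (\<Sum>i<k. X $$ (p,i) * z $ i)" if "p < n" for p
    unfolding a_def using that X z by (auto simp: scalar_prod_def atLeast0LessThan intro!: sum.cong)
  have qa: "q = (\<Sum>p<n. y p * a $ p)"
  proof -
    have "q = (\<Sum>i<k. \<Sum>p<n. y p * X $$ (p,i) * z $ i)" unfolding q_def d_def by (simp add: sum_distrib_right)
    also have "\<dots> = (\<Sum>p<n. \<Sum>i<k. y p * X $$ (p,i) * z $ i)" by (rule sum.swap)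
    also have "\<dots> = (\<Sum>p<n. y p * a $ p)" using aj by (simp add: sum_distrib_left ac_simps)
    finally show ?thesis .
  qed
  define W where "W = (\<Sum>p<n. (cmod (y p))\<^sup>2)"
  have "complex_of_real (\<Sum>p<n. (cmod (cnj (y p) - a $ p))\<^sup>2) = 
     (\<Sum>p<n. cnj (cnj (y p) - a $ p) * (cnj (y p) - a $ p))"
    unfolding of_real_sum cnj_mult_self ..
  also have "\<dots> = (\<Sum>p<n. cnj (y p) * y p - (y p * a $ p) - cnj (y p * a $ p) + cnj (a $ p) * a $ p)"
    by (intro sum.cong, auto simp: algebra_simps)
  also have "\<dots> = complex_of_real W - q - cnj q + complex_of_real N"
    unfolding W_def N_def qa of_real_sum cnj_mult_self cnj_sum sum.distrib sum_subtractf ..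
  also have "\<dots> = complex_of_real (W - N)" unfolding qN by simp
  finally have "W - N = (\<Sum>p<n. (cmod (cnj (y p) - a $ p))\<^sup>2)" by (metis of_real_eq_iff)
  hence "N \<le> W" by (smt (verit) sum_nonneg zero_le_power2)
  thus ?thesis unfolding qeq W_def using qN by auto
qed

lemma trace_bound:
  assumes A: "A \<in> carrier_mat n n" and X: "X \<in> carrier_mat n k" and Gi: "Ginv \<in> carrier_mat k k"
    and GG: "(cadjw X (\<lambda>j. complex_of_real 1) * X) * Ginv = 1\<^sub>m k"
    and u0: "\<And>j. u j \<ge> 0" and uw: "\<And>j. j < n \<Longrightarrow> u j * (\<Sum>p<n. (cmod (A $$ (j,p)))\<^sup>2) \<le> 1"
  shows "Re (trc (Ginv * (cadjw (A * X) (\<lambda>j. complex_of_real (u j)) * (A * X)))) \<le> real n"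
proof -
  define D where "D = A * X"
  have D: "D \<in> carrier_mat n k" unfolding D_def using A X by auto
  have Dj: "D $$ (j,i) = (\<Sum>p<n. A $$ (j,p) * X $$ (p,i))" if "j < n" "i < k" for j i
    unfolding D_def using that A X by (auto simp: scalar_prod_def atLeast0LessThan intro!: sum.cong)
  define q where "q j = (\<Sum>i<k. D $$ (j,i) * (\<Sum>l<k. Ginv $$ (i,l) * cnj (D $$ (j,l))))" for j
  have "trc (Ginv * (cadjw D (\<lambda>j. complex_of_real (u j)) * D)) = 
     (\<Sum>i<k. \<Sum>l<k. Ginv $$ (i,l) * (\<Sum>j<n. cnj (D $$ (j,l)) * complex_of_real (u j) * D $$ (j,i)))"
    using Gi D by (auto simp: trc_def cadjw_def scalar_prod_def atLeast0LessThan intro!: sum.cong)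
  also have "\<dots> = (\<Sum>i<k. \<Sum>l<k. \<Sum>j<n. complex_of_real (u j) * (D $$ (j,i) * (Ginv $$ (i,l) * cnj (D $$ (j,l)))))"
    by (simp add: sum_distrib_left ac_simps)
  also have "\<dots> = (\<Sum>i<k. \<Sum>j<n. \<Sum>l<k. complex_of_real (u j) * (D $$ (j,i) * (Ginv $$ (i,l) * cnj (D $$ (j,l)))))"
    by (rule sum.cong[OF refl], rule sum.swap)
  also have "\<dots> = (\<Sum>j<n. \<Sum>i<k. \<Sum>l<k. complex_of_real (u j) * (D $$ (j,i) * (Ginv $$ (i,l) * cnj (D $$ (j,l)))))"
    by (rule sum.swap)
  also have "\<dots> = (\<Sum>j<n. complex_of_real (u j) * q j)"
    unfolding q_def by (simp add: sum_distrib_left)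
  finally have tr: "trc (Ginv * (cadjw D (\<lambda>j. complex_of_real (u j)) * D)) = (\<Sum>j<n. complex_of_real (u j) * q j)" .
  have "Re (complex_of_real (u j) * q j) \<le> 1" if j: "j < n" for j
  proof -
    from proj_bound[OF X Gi GG, of "\<lambda>p. A $$ (j,p)"] obtain N where
      N: "(\<Sum>i<k. (\<Sum>p<n. A $$ (j,p) * X $$ (p,i)) * (\<Sum>l<k. Ginv $$ (i,l) * cnj (\<Sum>p<n. A $$ (j,p) * X $$ (p,l))))
      = complex_of_real N" and NW: "N \<le> (\<Sum>p<n. (cmod (A $$ (j,p)))\<^sup>2)" by blast
    have "q j = complex_of_real N" unfolding N[symmetric] q_def using Dj j by (intro sum.cong, auto)
    hence "Re (complex_of_real (u j) * q j) = u j * N" by simp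
    also have "\<dots> \<le> u j * (\<Sum>p<n. (cmod (A $$ (j,p)))\<^sup>2)" by (rule mult_left_mono[OF NW u0])
    also have "\<dots> \<le> 1" by (rule uw[OF j])
    finally show ?thesis .
  qed
  hence "Re (\<Sum>j<n. complex_of_real (u j) * q j) \<le> (\<Sum>j<n. 1)" unfolding Re_sum by (intro sum_mono, auto)
  thus ?thesis using tr unfolding D_def by simp
qed

lemma ifd1: "(if P then (1::complex) else 0) * x = (if P then x else 0)" by simp
lemma ifd2: "x * (if P then (1::complex) else 0) = (if P then x else 0)" by simp

lemma row_bound:
  fixes A :: "complex mat"
  assumes A: "A \<in> carrier_mat n n" and k: "0 < k" "k \<le> n"
    and cp: "char_poly A = (\<Prod>e\<leftarrow>es. [:- e, 1:])"
    and Mr: "\<And>\<alpha>. \<alpha> \<subseteq> {0..<n} \<Longrightarrow> card \<alpha> = k \<Longrightarrow> (\<Prod>i\<in>\<alpha>. vec_norm2 (row A i)) \<le> Mr"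
  shows "(cmod (\<Prod>i<k. es ! i))\<^sup>2 \<le> (real n / real k) ^ k * Mr\<^sup>2"
proof -
  obtain B P Q where sd: "schur_decomposition A es = (B,P,Q)" by (cases "schur_decomposition A es", auto)
  from schur_decomposition[OF A cp sd] have sim: "similar_mat_wit A B P Q" and ut: "upper_triangular B"
    and dg: "diag_mat B = es" by auto
  from sim A have B: "B \<in> carrier_mat n n" and P: "P \<in> carrier_mat n n" and Q: "Q \<in> carrier_mat n n"
    and PQ: "P * Q = 1\<^sub>m n" and QP: "Q * P = 1\<^sub>m n" and AB: "A = P * B * Q"
    unfolding similar_mat_wit_def Let_def by auto
  define E where "E = mat n k (\<lambda>(i,j). if i = j then (1::complex) else 0)"
  define X where "X = P * E"
  define Bk where "Bk = mat k k (\<lambda>(i,j). B $$ (i,j))"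
  have E: "E \<in> carrier_mat n k" unfolding E_def by auto
  have X: "X \<in> carrier_mat n k" unfolding X_def using P E by auto
  have Bk: "Bk \<in> carrier_mat k k" unfolding Bk_def by auto
  have BE: "B * E = E * Bk"
  proof (rule eq_matI)
    fix i j assume i: "i < dim_row (E * Bk)" and j: "j < dim_col (E * Bk)"
    hence i: "i < n" and j: "j < k" using E Bk by auto
    have "(B * E) $$ (i,j) = (\<Sum>l\<in>{0..<n}. B $$ (i,l) * (if l = j then 1 else 0))"
      using i j B E k by (auto simp: E_def scalar_prod_def intro!: sum.cong)
    also have "\<dots> = B $$ (i,j)" using j k by (simp add: ifd1 ifd2 sum.delta')
    also have "\<dots> = (\<Sum>l\<in>{0..<k}. (if i = l then 1 else 0) * B $$ (l,j))"
    proof (cases "i < k")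
      case True thus ?thesis by (simp add: ifd1 ifd2 sum.delta)
    next
      case False
      hence "B $$ (i,j) = 0" using ut B i j unfolding upper_triangular_def by auto
      thus ?thesis using False by (simp add: ifd1 ifd2 sum.delta)
    qed
    also have "\<dots> = (E * Bk) $$ (i,j)"
      using i j Bk E k by (auto simp: E_def Bk_def scalar_prod_def intro!: sum.cong)
    finally show "(B * E) $$ (i,j) = (E * Bk) $$ (i,j)" .
  qed (insert B E Bk, auto)
  have PB: "P * B \<in> carrier_mat n n" and PE: "P * E \<in> carrier_mat n k" using P B E by auto
  have QPE: "Q * (P * E) = E" using assoc_mult_mat[OF Q P E, symmetric] QP E by simp
  have AX: "A * X = X * Bk"
  proof -
    have "A * X = ((P * B) * Q) * (P * E)" unfolding AB X_def ..
    also have "\<dots> = (P * B) * (Q * (P * E))" by (rule assoc_mult_mat[OF PB Q PE])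
    also have "\<dots> = (P * B) * E" unfolding QPE ..
    also have "\<dots> = P * (B * E)" by (rule assoc_mult_mat[OF P B E])
    also have "\<dots> = P * (E * Bk)" unfolding BE ..
    also have "\<dots> = (P * E) * Bk" by (rule assoc_mult_mat[OF P E Bk, symmetric])
    finally show ?thesis unfolding X_def .
  qed
  have dBk: "det Bk = (\<Prod>i<k. es ! i)"
  proof -
    have utk: "upper_triangular Bk" using ut B k unfolding upper_triangular_def Bk_def by auto
    have "det Bk = (\<Prod>i=0..<k. Bk $$ (i,i))" using det_upper_triangular[OF utk Bk] Bk
      by (simp add: prod_list_diag_prod)
    also have "\<dots> = (\<Prod>i<k. es ! i)" unfolding dg[symmetric] using B k
      by (auto simp: diag_mat_def Bk_def atLeast0LessThan intro!: prod.cong)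
    finally show ?thesis .
  qed
  have Xinj: "v = 0\<^sub>v k" if v: "v \<in> carrier_vec k" and Xv: "X *\<^sub>v v = 0\<^sub>v n" for v
  proof -
    have "transpose_mat E * E = 1\<^sub>m k"
      by (rule eq_matI, insert E k, auto simp: E_def scalar_prod_def ifd1 ifd2 sum.delta)
    hence L: "(transpose_mat E * Q) * X = 1\<^sub>m k" unfolding X_def
      using assoc_mult_mat[OF _ Q PE, of "transpose_mat E" k] E QPE by simp
    have "v = (transpose_mat E * Q) * X *\<^sub>v v" unfolding L using v by simp
    also have "\<dots> = (transpose_mat E * Q) *\<^sub>v (X *\<^sub>v v)"
      by (rule assoc_mult_mat_vec[OF _ X v], insert E Q, auto)
    also have "\<dots> = 0\<^sub>v k" unfolding Xv using E Q by (intro eq_vecI, auto simp: scalar_prod_def)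
    finally show ?thesis .
  qed
  define G where "G = cadjw X (\<lambda>j. complex_of_real 1) * X"
  have G: "G \<in> carrier_mat k k" unfolding G_def using X by (auto simp: cadjw_def)
  define gX where "gX = Sr X n k (\<lambda>j. 1) / fact k"
  have dG: "det G = complex_of_real gX" unfolding G_def gX_def by (rule CB3[OF X])
  have QG: "(\<Sum>i<k. cnj (v $ i) * (G *\<^sub>v v) $ i) = complex_of_real (\<Sum>j<n. (cmod ((X *\<^sub>v v) $ j))\<^sup>2)"
    if v: "v \<in> carrier_vec k" for v
    unfolding G_def using QF_real[OF X v, of "\<lambda>j. 1"] by simp
  have QGpos: "(\<Sum>j<n. (cmod ((X *\<^sub>v v) $ j))\<^sup>2) > 0" if v: "v \<in> carrier_vec k" "v \<noteq> 0\<^sub>v k" for v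
  proof -
    have "(\<Sum>j<n. (cmod ((X *\<^sub>v v) $ j))\<^sup>2) \<noteq> 0"
    proof
      assume "(\<Sum>j<n. (cmod ((X *\<^sub>v v) $ j))\<^sup>2) = 0"
      hence "X *\<^sub>v v = 0\<^sub>v n" by (intro vec_zero_if_normsq[OF mult_mat_vec_carrier[OF X v(1)]])
      thus False using Xinj v by auto
    qed
    moreover have "(\<Sum>j<n. (cmod ((X *\<^sub>v v) $ j))\<^sup>2) \<ge> 0" by (intro sum_nonneg, auto)
    ultimately show ?thesis by linarith
  qed
  have dG0: "det G \<noteq> 0"
  proof
    assume "det G = 0"
    then obtain v where v: "v \<in> carrier_vec k" "v \<noteq> 0\<^sub>v k" and Gv: "G *\<^sub>v v = 0\<^sub>v k"
      using det_0_iff_vec_prod_zero[OF G] by auto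
    have "complex_of_real (\<Sum>j<n. (cmod ((X *\<^sub>v v) $ j))\<^sup>2) = 0"
      unfolding QG[OF v(1), symmetric] Gv by simp
    thus False using QGpos[OF v] by (metis of_real_eq_0_iff less_irrefl)
  qed
  have gX: "gX > 0" using dG0 dG Sr_nonneg[of "\<lambda>j. 1" X n k] unfolding gX_def by simp
  define D where "D = A * X"
  have D: "D \<in> carrier_mat n k" unfolding D_def using A X by auto
  define w where "w j = (vec_norm2 (row A j))\<^sup>2" for j
  define u where "u j = (if w j = 0 then 0 else 1 / w j)" for j
  have u0: "u j \<ge> 0" for j unfolding u_def w_def by auto
  have S1: "Sr D n k (\<lambda>j. 1) / fact k = (cmod (det Bk))\<^sup>2 * gX"
  proof -
    have DXB: "D = X * Bk" unfolding D_def AX ..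
    have cX: "cadjw X (\<lambda>j. complex_of_real 1) \<in> carrier_mat k n" using X by (auto simp: cadjw_def)
    have cB: "cadjw Bk (\<lambda>j. complex_of_real 1) \<in> carrier_mat k k" using Bk by (auto simp: cadjw_def)
    have "cadjw D (\<lambda>j. complex_of_real 1) * D = 
       (cadjw Bk (\<lambda>j. complex_of_real 1) * cadjw X (\<lambda>j. complex_of_real 1)) * (X * Bk)"
      unfolding DXB cadjw_mult[OF X Bk] ..
    also have "\<dots> = cadjw Bk (\<lambda>j. complex_of_real 1) * (cadjw X (\<lambda>j. complex_of_real 1) * (X * Bk))"
      by (rule assoc_mult_mat[OF cB cX], insert X Bk, auto)
    also have "cadjw X (\<lambda>j. complex_of_real 1) * (X * Bk) = G * Bk"
      unfolding G_def by (rule assoc_mult_mat[OF cX X Bk, symmetric])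
    finally have "det (cadjw D (\<lambda>j. complex_of_real 1) * D) = cnj (det Bk) * (det G * det Bk)"
      using det_mult[OF cB, of "G * Bk"] det_mult[OF G Bk] det_cadjw[OF Bk] G Bk by simp
    also have "\<dots> = complex_of_real ((cmod (det Bk))\<^sup>2 * gX)"
      unfolding dG of_real_mult cnj_mult_self[symmetric] by (simp add: ac_simps)
    finally have "complex_of_real (Sr D n k (\<lambda>j. 1) / fact k) = complex_of_real ((cmod (det Bk))\<^sup>2 * gX)"
      using CB3[OF D, of "\<lambda>j. 1"] by simp
    thus ?thesis by (metis of_real_eq_iff)
  qed
  have wz: "D $$ (j,l) = 0" if "w j = 0" "j < n" "l < k" for j l
  proof -
    have "vec_norm2 (row A j) = 0" using that(1) unfolding w_def by simp
    hence Az: "A $$ (j,p) = 0" if "p < n" for p using vec_norm2_zero[of "row A j" p] that A \<open>j < n\<close> by auto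
    show ?thesis unfolding D_def using that A X Az by (auto simp: scalar_prod_def)
  qed
  have cmp: "Sr D n k (\<lambda>j. 1) \<le> Mr\<^sup>2 * Sr D n k u"
    unfolding Sr_def sum_distrib_left
  proof (rule sum_mono)
    fix f assume f: "f \<in> Fset k n"
    hence fn: "f i < n" if "i < k" for i using that unfolding Fset_def by auto
    let ?d = "(cmod (det (rowsel D k f)))\<^sup>2"
    show "(\<Prod>i\<in>{0..<k}. 1) * ?d \<le> Mr\<^sup>2 * ((\<Prod>i\<in>{0..<k}. u (f i)) * ?d)"
    proof (cases "det (rowsel D k f) = 0")
      case True thus ?thesis by simp
    next
      case False
      hence inj: "inj_on f {0..<k}" using rowsel_noninj by blast
      have wpos: "w (f i) > 0" if i: "i < k" for i
      proof (rule ccontr)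
        assume "\<not> w (f i) > 0"
        hence "w (f i) = 0" unfolding w_def by (simp add: less_le)
        hence "det (rowsel D k f) = 0" 
          by (intro det_zero_row[OF rowsel_carrier i], insert wz fn i, auto simp: rowsel_def)
        thus False using False by simp
      qed
      define \<alpha> where "\<alpha> = f ` {0..<k}"
      have \<alpha>: "\<alpha> \<subseteq> {0..<n}" "card \<alpha> = k" unfolding \<alpha>_def using fn card_image[OF inj] by auto
      have "(\<Prod>i\<in>{0..<k}. w (f i)) = (\<Prod>j\<in>\<alpha>. w j)" unfolding \<alpha>_def
        using prod.reindex[OF inj, of w] by simp
      also have "\<dots> = (\<Prod>j\<in>\<alpha>. vec_norm2 (row A j))\<^sup>2" unfolding w_def by (simp add: prod_power_distrib)
      also have "\<dots> \<le> Mr\<^sup>2" 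
        by (rule power_mono[OF Mr[OF \<alpha>]], intro prod_nonneg, auto simp: vec_norm2_nonneg)
      finally have wM: "(\<Prod>i\<in>{0..<k}. w (f i)) \<le> Mr\<^sup>2" .
      have uw: "(\<Prod>i\<in>{0..<k}. u (f i)) * (\<Prod>i\<in>{0..<k}. w (f i)) = 1"
        unfolding prod.distrib[symmetric] using wpos by (intro prod.neutral ballI, simp add: u_def, metis less_irrefl)
      have "(\<Prod>i\<in>{0..<k}. 1) * ?d = ((\<Prod>i\<in>{0..<k}. w (f i)) * ((\<Prod>i\<in>{0..<k}. u (f i)) * ?d))"
        using uw by (simp add: ac_simps)
      also have "\<dots> \<le> Mr\<^sup>2 * ((\<Prod>i\<in>{0..<k}. u (f i)) * ?d)"
        by (rule mult_right_mono[OF wM], insert u0, auto intro!: prod_nonneg mult_nonneg_nonneg)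
      finally show ?thesis .
    qed
  qed
  define Kw where "Kw = cadjw D (\<lambda>j. complex_of_real (u j)) * D"
  have Kw: "Kw \<in> carrier_mat k k" unfolding Kw_def using D by (auto simp: cadjw_def)
  have dKw: "det Kw = complex_of_real (Sr D n k u / fact k)" unfolding Kw_def by (rule CB3[OF D])
  define Ginv where "Ginv = (1 / det G) \<cdot>\<^sub>m adj_mat G"
  have Ginv: "Ginv \<in> carrier_mat k k" unfolding Ginv_def using adj_mat(1)[OF G] by auto
  have GGinv: "G * Ginv = 1\<^sub>m k" unfolding Ginv_def
    using mult_smult_distrib[OF G adj_mat(1)[OF G], of "1 / det G"] adj_mat(2)[OF G] dG0 by (simp, intro eq_matI, auto)
  define K' where "K' = Ginv * Kw"
  have K': "K' \<in> carrier_mat k k" unfolding K'_def using Ginv Kw by auto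
  have KwG: "Kw = G * K'" unfolding K'_def using G Ginv Kw GGinv
    by (simp add: assoc_mult_mat[symmetric, of G k k Ginv k Kw k])
  have dK: "det Kw = det G * det K'" unfolding KwG by (rule det_mult[OF G K'])
  have evK: "Im e = 0 \<and> Re e \<ge> 0" if "eigenvalue K' e" for e
  proof -
    from that obtain v where v: "v \<in> carrier_vec k" "v \<noteq> 0\<^sub>v k" and Kv: "K' *\<^sub>v v = e \<cdot>\<^sub>v v"
      unfolding eigenvalue_def eigenvector_def using K' by auto
    have "Kw *\<^sub>v v = G *\<^sub>v (K' *\<^sub>v v)" unfolding KwG by (rule assoc_mult_mat_vec[OF G K' v(1)])
    also have "\<dots> = e \<cdot>\<^sub>v (G *\<^sub>v v)" unfolding Kv by (rule mult_mat_vec[OF G v(1)])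
    finally have KGv: "Kw *\<^sub>v v = e \<cdot>\<^sub>v (G *\<^sub>v v)" .
    define a where "a = (\<Sum>j<n. u j * (cmod ((D *\<^sub>v v) $ j))\<^sup>2)"
    define b where "b = (\<Sum>j<n. (cmod ((X *\<^sub>v v) $ j))\<^sup>2)"
    have a0: "a \<ge> 0" unfolding a_def using u0 by (intro sum_nonneg, auto)
    have b0: "b > 0" unfolding b_def by (rule QGpos[OF v])
    have "complex_of_real a = (\<Sum>i<k. cnj (v $ i) * (Kw *\<^sub>v v) $ i)"
      unfolding a_def Kw_def using QF_real[OF D v(1), of u] by simp
    also have "\<dots> = e * (\<Sum>i<k. cnj (v $ i) * (G *\<^sub>v v) $ i)"
      unfolding KGv sum_distrib_left using G v by (intro sum.cong, auto)
    also have "\<dots> = e * complex_of_real b" unfolding QG[OF v(1)] b_def ..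
    finally have "e = complex_of_real (a / b)" using b0 by (simp add: field_simps)
    thus ?thesis using a0 b0 by simp
  qed
  have trK: "Re (trc K') \<le> real n" unfolding K'_def Kw_def D_def
  proof (rule trace_bound[OF A X Ginv _ u0])
    show "cadjw X (\<lambda>j. complex_of_real 1) * X * Ginv = 1\<^sub>m k" using GGinv unfolding G_def .
    fix j assume j: "j < n"
    have "w j = (\<Sum>p<n. (cmod (A $$ (j,p)))\<^sup>2)" unfolding w_def vec_norm2_def using A j
      by (simp add: sum_nonneg)
    thus "u j * (\<Sum>p<n. (cmod (A $$ (j,p)))\<^sup>2) \<le> 1" unfolding u_def by auto
  qed
  from EIG[OF K' k(1) evK trK] have eig: "Im (det K') = 0" "Re (det K') \<le> (real n / real k) ^ k" by auto
  have "complex_of_real (Sr D n k u / fact k) = complex_of_real gX * det K'" using dK dKw dG by simp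
  hence "Sr D n k u / fact k = Re (complex_of_real gX * det K')" by (metis Re_complex_of_real)
  hence "Sr D n k u / fact k = gX * Re (det K')" by simp
  moreover have "Sr D n k (\<lambda>j. 1) / fact k \<le> Mr\<^sup>2 * (Sr D n k u / fact k)"
    using divide_right_mono[OF cmp, of "fact k"] by simp
  ultimately have "(cmod (det Bk))\<^sup>2 * gX \<le> Mr\<^sup>2 * (gX * Re (det K'))"
    using S1 by simp
  also have "\<dots> \<le> Mr\<^sup>2 * (gX * (real n / real k) ^ k)"
    using eig(2) gX by (intro mult_left_mono, auto)
  finally have "gX * (cmod (det Bk))\<^sup>2 \<le> gX * (Mr\<^sup>2 * (real n / real k) ^ k)"
    by (simp add: ac_simps)
  hence "(cmod (det Bk))\<^sup>2 \<le> Mr\<^sup>2 * (real n / real k) ^ k" using gX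
    by (rule mult_left_le_imp_le)
  thus ?thesis unfolding dBk by (simp add: mult.commute)
qed


theorem theorem3p5:
  fixes A :: "complex mat" and n k :: nat and es :: "complex list"
  assumes "0 < k" and "k \<le> n"
    and "A \<in> carrier_mat n n"
    and "is_eigenvalue_list A es"
    and "sorted_wrt (\<lambda>a b. cmod a \<ge> cmod b) es"
  shows "cmod (\<Prod>i<k. es ! i) \<le>
     (real n / real k) powr (real k / 2) *
     min (Max ((\<lambda>\<alpha>. \<Prod>i\<in>\<alpha>. vec_norm2 (col A i)) ` {\<alpha>. \<alpha> \<subseteq> {0..<n} \<and> card \<alpha> = k}))
         (Max ((\<lambda>\<alpha>. \<Prod>i\<in>\<alpha>. vec_norm2 (row A i)) ` {\<alpha>. \<alpha> \<subseteq> {0..<n} \<and> card \<alpha> = k}))"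
proof -
  note k = assms(1,2) and A = assms(3)
  have cp: "char_poly A = (\<Prod>e\<leftarrow>es. [:- e, 1:])" using assms(4) unfolding is_eigenvalue_list_def by auto
  define S where "S = {\<alpha>. \<alpha> \<subseteq> {0..<n} \<and> card \<alpha> = k}"
  have fS: "finite S" unfolding S_def by (rule finite_subset[of _ "Pow {0..<n}"], auto)
  have kS: "{0..<k} \<in> S" unfolding S_def using k by auto
  define Mc where "Mc = Max ((\<lambda>\<alpha>. \<Prod>i\<in>\<alpha>. vec_norm2 (col A i)) ` S)"
  define Mr where "Mr = Max ((\<lambda>\<alpha>. \<Prod>i\<in>\<alpha>. vec_norm2 (row A i)) ` S)"
  have Mc: "(\<Prod>i\<in>\<alpha>. vec_norm2 (col A i)) \<le> Mc" if "\<alpha> \<in> S" for \<alpha>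
    unfolding Mc_def using fS that by (intro Max_ge, auto)
  have Mr: "(\<Prod>i\<in>\<alpha>. vec_norm2 (row A i)) \<le> Mr" if "\<alpha> \<in> S" for \<alpha>
    unfolding Mr_def using fS that by (intro Max_ge, auto)
  have Mc0: "Mc \<ge> 0" using Mc[OF kS] by (smt (verit) prod_nonneg vec_norm2_nonneg)
  have Mr0: "Mr \<ge> 0" using Mr[OF kS] by (smt (verit) prod_nonneg vec_norm2_nonneg)
  have r: "(cmod (\<Prod>i<k. es ! i))\<^sup>2 \<le> (real n / real k) ^ k * Mr\<^sup>2"
    by (rule row_bound[OF A k cp], rule Mr, auto simp: S_def)
  have At: "transpose_mat A \<in> carrier_mat n n" using A by auto
  have cpt: "char_poly (transpose_mat A) = (\<Prod>e\<leftarrow>es. [:- e, 1:])" using cp A by simp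
  have c: "(cmod (\<Prod>i<k. es ! i))\<^sup>2 \<le> (real n / real k) ^ k * Mc\<^sup>2"
  proof (rule row_bound[OF At k cpt])
    fix \<alpha> assume a: "\<alpha> \<subseteq> {0..<n}" "card \<alpha> = k"
    have "(\<Prod>i\<in>\<alpha>. vec_norm2 (row (transpose_mat A) i)) = (\<Prod>i\<in>\<alpha>. vec_norm2 (col A i))"
      by (rule prod.cong[OF refl], insert a A, auto)
    thus "(\<Prod>i\<in>\<alpha>. vec_norm2 (row (transpose_mat A) i)) \<le> Mc" using Mc[of \<alpha>] a by (auto simp: S_def)
  qed
  define m where "m = min Mc Mr"
  have m0: "m \<ge> 0" using Mc0 Mr0 by (simp add: m_def)
  have sq: "(cmod (\<Prod>i<k. es ! i))\<^sup>2 \<le> (real n / real k) ^ k * m\<^sup>2"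
    using r c by (cases "Mc \<le> Mr", auto simp: m_def min_def)
  have q0: "real n / real k > 0" using k by auto
  have "(real n / real k) ^ k * m\<^sup>2 = ((real n / real k) powr (real k / 2) * m)\<^sup>2"
  proof -
    have "((real n / real k) powr (real k / 2))\<^sup>2 = (real n / real k) powr (real k / 2) * (real n / real k) powr (real k / 2)"
      by (simp add: power2_eq_square)
    also have "\<dots> = (real n / real k) powr (real k)" by (simp add: powr_add[symmetric])
    also have "\<dots> = (real n / real k) ^ k" by (rule powr_realpow[OF q0])
    finally show ?thesis by (simp add: power_mult_distrib)
  qed
  hence "(cmod (\<Prod>i<k. es ! i))\<^sup>2 \<le> ((real n / real k) powr (real k / 2) * m)\<^sup>2" using sq by simp
  hence "cmod (\<Prod>i<k. es ! i) \<le> (real n / real k) powr (real k / 2) * m"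
    by (rule power2_le_imp_le, insert m0, auto)
  thus ?thesis unfolding m_def Mc_def Mr_def S_def .
qed

end
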